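(* Let $\phi:[0,1]\to[0,1]$ be a strictly increasing continuous function with $\phi(0)=0$ and $\phi(1)=1$, and let $1\le p<\infty$. Let $A_1$ be the operator $(A_1f)(x)=\int_0^{\phi(x)}f(t)\,dt$ on $L_p[0,1]$ and $A_2$ the operator given by the same formula on $L_2[0,1]$. Then $A_1$ is quasisimilar to $A_2$; in particular $\sigma_p(A_1)=\sigma_p(A_2)$.
   Context: For bounded operators $A_i$ on Banach spaces $X_i$ ($i=1,2$), $A_1$ is quasisimilar to $A_2$ if there exist bounded injective operators with dense range $K:X_1\to X_2$ and $L:X_2\to X_1$ such that $A_1L=LA_2$ and $KA_1=A_2K$. $\sigma_p$ denotes the point spectrum. *)

theory Defs
  imports "HOL-Analysis.Analysis"
begin

text \<open>Complex L_p[0,1], modelled as measurable functions real => complex whose p-th power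
of the modulus is integrable on [0,1]; elements are identified up to a.e. equality on [0,1].\<close>

definition Lp :: "real \<Rightarrow> (real \<Rightarrow> complex) set" where
  "Lp p = {f. set_borel_measurable lebesgue {0..1} f \<and>
              set_integrable lebesgue {0..1} (\<lambda>x. norm (f x) powr p)}"

definition lpnorm :: "real \<Rightarrow> (real \<Rightarrow> complex) \<Rightarrow> real" where
  "lpnorm p f = (set_lebesgue_integral lebesgue {0..1} (\<lambda>x. norm (f x) powr p)) powr (1 / p)"

definition aeq :: "(real \<Rightarrow> complex) \<Rightarrow> (real \<Rightarrow> complex) \<Rightarrow> bool" where
  "aeq f g \<longleftrightarrow> (AE x in lebesgue. x \<in> {0..1} \<longrightarrow> f x = g x)"

definition bounded_op :: "real \<Rightarrow> real \<Rightarrow> ((real \<Rightarrow> complex) \<Rightarrow> (real \<Rightarrow> complex)) \<Rightarrow> bool" where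
  "bounded_op p q K \<longleftrightarrow>
     (\<forall>f\<in>Lp p. K f \<in> Lp q) \<and>
     (\<forall>f\<in>Lp p. \<forall>g\<in>Lp p. aeq f g \<longrightarrow> aeq (K f) (K g)) \<and>
     (\<forall>f\<in>Lp p. \<forall>g\<in>Lp p. \<forall>a b. aeq (K (\<lambda>x. a * f x + b * g x)) (\<lambda>x. a * K f x + b * K g x)) \<and>
     (\<exists>C. \<forall>f\<in>Lp p. lpnorm q (K f) \<le> C * lpnorm p f)"

definition injective_op :: "real \<Rightarrow> ((real \<Rightarrow> complex) \<Rightarrow> (real \<Rightarrow> complex)) \<Rightarrow> bool" where
  "injective_op p K \<longleftrightarrow> (\<forall>f\<in>Lp p. aeq (K f) (\<lambda>_. 0) \<longrightarrow> aeq f (\<lambda>_. 0))"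

definition dense_range_op :: "real \<Rightarrow> real \<Rightarrow> ((real \<Rightarrow> complex) \<Rightarrow> (real \<Rightarrow> complex)) \<Rightarrow> bool" where
  "dense_range_op p q K \<longleftrightarrow>
     (\<forall>g\<in>Lp q. \<forall>e>0. \<exists>f\<in>Lp p. lpnorm q (\<lambda>x. K f x - g x) < e)"

definition quasisimilar ::
  "real \<Rightarrow> ((real \<Rightarrow> complex) \<Rightarrow> (real \<Rightarrow> complex)) \<Rightarrow>
   real \<Rightarrow> ((real \<Rightarrow> complex) \<Rightarrow> (real \<Rightarrow> complex)) \<Rightarrow> bool" where
  "quasisimilar p A1 q A2 \<longleftrightarrow>
     (\<exists>K L. bounded_op p q K \<and> injective_op p K \<and> dense_range_op p q K \<and>
            bounded_op q p L \<and> injective_op q L \<and> dense_range_op q p L \<and>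
            (\<forall>g\<in>Lp q. aeq (A1 (L g)) (L (A2 g))) \<and>
            (\<forall>f\<in>Lp p. aeq (K (A1 f)) (A2 (K f))))"

definition point_spectrum :: "real \<Rightarrow> ((real \<Rightarrow> complex) \<Rightarrow> (real \<Rightarrow> complex)) \<Rightarrow> complex set" where
  "point_spectrum p A =
     {c. \<exists>f\<in>Lp p. \<not> aeq f (\<lambda>_. 0) \<and> aeq (A f) (\<lambda>x. c * f x)}"

definition comp_volterra :: "(real \<Rightarrow> real) \<Rightarrow> (real \<Rightarrow> complex) \<Rightarrow> (real \<Rightarrow> complex)" where
  "comp_volterra \<phi> f = (\<lambda>x. set_lebesgue_integral lebesgue {0..\<phi> x} f)"

end

theory Submission
  imports Defs
begin


lemma le_powr_aux: fixes t p :: real assumes "t \<ge> 0" "p \<ge> 1" shows "t \<le> 1 + t powr p"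
proof (cases "t \<le> 1")
  case True then show ?thesis using assms by (smt (verit) powr_ge_zero)
next
  case False
  then have "t powr 1 \<le> t powr p" using assms by (intro powr_mono) auto
  then show ?thesis using False by simp
qed

lemma Lp_integrable:
  assumes "f \<in> Lp p" "p \<ge> 1"
  shows "set_integrable lebesgue {0..1} f"
proof -
  have m: "set_borel_measurable lebesgue {0..1} f"
   and i: "set_integrable lebesgue {0..1} (\<lambda>x. norm (f x) powr p)"
    using assms unfolding Lp_def by auto
  have "set_integrable lebesgue {0..1::real} (\<lambda>x. 1::real)"
    by (rule absolutely_integrable_on_const) auto
  then have j: "set_integrable lebesgue {0..1} (\<lambda>x. 1 + norm (f x) powr p)"
    using i by (rule set_integral_add)
  show ?thesis
    by (rule set_integrable_bound[OF j m]) (use le_powr_aux[OF _ assms(2)] in \<open>auto\<close>)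
qed

lemma Lp_bounded:
  fixes h :: "real \<Rightarrow> complex"
  assumes "set_borel_measurable lebesgue {0..1} h" "\<And>x. x \<in> {0..1} \<Longrightarrow> norm (h x) \<le> B" "q \<ge> 0"
  shows "h \<in> Lp q"
proof -
  have "set_integrable lebesgue {0..1::real} (\<lambda>x. B powr q)"
    by (rule absolutely_integrable_on_const) auto
  moreover have "set_borel_measurable lebesgue {0..1} (\<lambda>x. norm (h x) powr q)"
  proof -
    have "(\<lambda>x. norm (indicator {0..1} x *\<^sub>R h x) powr q) \<in> borel_measurable lebesgue"
      using assms(1) unfolding set_borel_measurable_def by measurable
    moreover have "(\<lambda>x. norm (indicator {0..1::real} x *\<^sub>R h x) powr q) = (\<lambda>x. indicator {0..1} x *\<^sub>R (norm (h x) powr q))"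
      by (auto simp: indicator_def)
    ultimately show ?thesis unfolding set_borel_measurable_def by simp
  qed
  ultimately have "set_integrable lebesgue {0..1} (\<lambda>x. norm (h x) powr q)"
  proof (rule set_integrable_bound)
    show "AE x\<in>{0..1} in lebesgue. norm (norm (h x) powr q) \<le> norm (B powr q)"
    proof (rule AE_I2, intro impI)
      fix x :: real assume x: "x \<in> {0..1}"
      have "norm (h x) powr q \<le> B powr q" using assms(2)[OF x] assms(3) by (intro powr_mono2) auto
      then show "norm (norm (h x) powr q) \<le> norm (B powr q)" by simp
    qed
  qed
  then show ?thesis using assms(1) unfolding Lp_def by auto
qed




lemma young_aux:
  fixes a t p :: real assumes "a \<ge> 0" "t > 0" "p \<ge> 1"
  shows "a \<le> t + t powr (1 - p) * a powr p"
proof (cases "a \<le> t")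
  case True then show ?thesis using assms by (smt (verit) mult_nonneg_nonneg powr_ge_zero)
next
  case False
  then have "(a/t) powr 1 \<le> (a/t) powr p" using assms by (intro powr_mono) auto
  then have "a / t \<le> a powr p / t powr p" using assms False by (simp add: powr_divide)
  then have "a \<le> a powr p / t powr p * t" using assms by (simp add: field_simps)
  also have "\<dots> = t powr (1 - p) * a powr p" using assms by (simp add: powr_diff field_simps)
  finally show ?thesis using assms by (smt (verit) powr_ge_zero)
qed

lemma Lp_powr_integral:
  assumes "f \<in> Lp p"
  shows "(\<lambda>y. norm (f y) powr p) integrable_on {0..1}"
    "lpnorm p f = integral {0..1} (\<lambda>y. norm (f y) powr p) powr (1/p)"
  using assms set_lebesgue_integral_eq_integral[of "{0..1}" "\<lambda>y. norm (f y) powr p"]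
  unfolding Lp_def lpnorm_def by auto

lemma L1_le_Lp:
  assumes "f \<in> Lp p" "p \<ge> 1"
  shows "integral {0..1} (\<lambda>y. norm (f y)) \<le> 2 * lpnorm p f"
proof -
  define S where "S = integral {0..1} (\<lambda>y. norm (f y) powr p)"
  have pi: "(\<lambda>y. norm (f y) powr p) integrable_on {0..1}" and ln: "lpnorm p f = S powr (1/p)"
    using Lp_powr_integral[OF assms(1)] by (auto simp: S_def)
  have nfi: "(\<lambda>y. norm (f y)) integrable_on {0..1}"
    using set_lebesgue_integral_eq_integral(1)[OF set_integrable_norm[OF Lp_integrable[OF assms]]] .
  have S0: "S \<ge> 0" unfolding S_def by (rule integral_nonneg[OF pi]) auto
  have key: "integral {0..1} (\<lambda>y. norm (f y)) \<le> t + t powr (1 - p) * S" if t: "t > 0" for t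
  proof -
    have "integral {0..1} (\<lambda>y. norm (f y)) \<le> integral {0..1} (\<lambda>y. t + t powr (1 - p) * norm (f y) powr p)"
      by (rule integral_le[OF nfi]) (auto intro!: integrable_add integrable_on_mult_right pi young_aux t assms(2))
    also have "\<dots> = t + t powr (1 - p) * S"
      by (subst integral_add) (auto simp: S_def integrable_on_const intro!: integrable_on_mult_right pi)
    finally show ?thesis .
  qed
  show ?thesis
  proof (cases "S = 0")
    case True
    have "integral {0..1} (\<lambda>y. norm (f y)) \<le> 0"
    proof (rule field_le_epsilon)
      fix e :: real assume "0 < e"
      from key[OF this] True show "integral {0..1} (\<lambda>y. norm (f y)) \<le> 0 + e" by simp
    qed
    then show ?thesis using True ln by simp
  next
    case False
    define s where "s = S powr (1/p)"
    have s: "s > 0" using False S0 by (simp add: s_def)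
    have "s powr p = S powr (1/p * p)" unfolding s_def by (rule powr_powr)
    also have "\<dots> = S" using S0 assms(2) by simp
    finally have sp: "s powr p = S" .
    have "s powr (1 - p) * S = s powr (1 - p) * s powr p" using sp by simp
    also have "\<dots> = s powr (1 - p + p)" by (rule powr_add[symmetric])
    also have "\<dots> = s" using s by simp
    finally have "s powr (1 - p) * S = s" .
    then show ?thesis using key[OF s] ln by (simp add: s_def)
  qed
qed

lemma lpnorm_le:
  fixes h :: "real \<Rightarrow> complex"
  assumes "set_borel_measurable lebesgue {0..1} h" "\<And>x. x \<in> {0..1} \<Longrightarrow> norm (h x) \<le> B" "q \<ge> 1"
  shows "lpnorm q h \<le> B"
proof -
  have B: "B \<ge> 0" using assms(2)[of 0] by (smt (verit) atLeastAtMost_iff norm_ge_zero)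
  have hq: "h \<in> Lp q" by (rule Lp_bounded[OF assms(1,2)]) (use assms(3) in auto)
  note P = Lp_powr_integral[OF hq]
  have I0: "integral {0..1} (\<lambda>y. norm (h y) powr q) \<ge> 0" by (rule integral_nonneg[OF P(1)]) auto
  have "integral {0..1} (\<lambda>y. norm (h y) powr q) \<le> integral {0..1} (\<lambda>y::real. B powr q)"
    using P(1) apply (rule integral_le)
    using assms B by (auto intro!: powr_mono2)
  also have "\<dots> = B powr q" by simp
  finally have le: "integral {0..1} (\<lambda>y. norm (h y) powr q) \<le> B powr q" .
  have "lpnorm q h \<le> (B powr q) powr (1/q)"
    unfolding P(2) by (rule powr_mono2) (use le I0 assms(3) in auto)
  also have "\<dots> = B powr (q * (1/q))" by (rule powr_powr)
  also have "\<dots> = B" using B assms(3) by simp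
  finally show ?thesis .
qed




locale phi =
  fixes \<phi> :: "real \<Rightarrow> real"
  assumes mono: "strict_mono_on {0..1} \<phi>" and cont: "continuous_on {0..1} \<phi>"
    and phi0: "\<phi> 0 = 0" and phi1: "\<phi> 1 = 1"
begin

lemma phi_range: "x \<in> {0..1} \<Longrightarrow> \<phi> x \<in> {0..1}"
  using strict_mono_on_leD[OF mono, of 0 x] strict_mono_on_leD[OF mono, of x 1] phi0 phi1 by auto

lemma phi_surj: assumes "t \<in> {0..1}" shows "\<exists>x\<in>{0..1}. \<phi> x = t"
  using IVT'[of \<phi> 0 t 1] assms cont phi0 phi1 by auto

lemma A_eq:
  assumes "set_integrable lebesgue {0..1} f" "x \<in> {0..1}"
  shows "comp_volterra \<phi> f x = integral {0..\<phi> x} f"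
proof -
  have "set_integrable lebesgue {0..\<phi> x} f"
    by (rule set_integrable_subset[OF assms(1)]) (use phi_range[OF assms(2)] in auto)
  then show ?thesis unfolding comp_volterra_def by (rule set_lebesgue_integral_eq_integral(2))
qed

lemma A_cont:
  assumes "set_integrable lebesgue {0..1} f"
  shows "continuous_on {0..1} (comp_volterra \<phi> f)"
proof -
  have fi: "f integrable_on {0..1}" using set_lebesgue_integral_eq_integral(1)[OF assms] .
  have "continuous_on {0..1} ((\<lambda>t. integral {0..t} f) \<circ> \<phi>)"
    by (rule continuous_on_compose[OF cont continuous_on_subset[OF indefinite_integral_continuous_1[OF fi]]])
       (use phi_range in auto)
  then show ?thesis
    by (rule continuous_on_cong[THEN iffD1, rotated 2]) (auto simp: A_eq[OF assms])
qed

lemma A_bound: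
  assumes "set_integrable lebesgue {0..1} f" "x \<in> {0..1}"
  shows "norm (comp_volterra \<phi> f x) \<le> integral {0..1} (\<lambda>y. norm (f y))"
proof -
  have fi: "f integrable_on {0..1}" using set_lebesgue_integral_eq_integral(1)[OF assms(1)] .
  have nfi: "(\<lambda>y. norm (f y)) integrable_on {0..1}"
    using set_lebesgue_integral_eq_integral(1)[OF set_integrable_norm[OF assms(1)]] .
  have sub: "{0..\<phi> x} \<subseteq> {0..1}" using phi_range[OF assms(2)] by auto
  have "norm (integral {0..\<phi> x} f) \<le> integral {0..\<phi> x} (\<lambda>y. norm (f y))"
    by (rule integral_norm_bound_integral) (auto intro: integrable_on_subinterval[OF fi sub] integrable_on_subinterval[OF nfi sub])
  also have "\<dots> \<le> integral {0..1} (\<lambda>y. norm (f y))"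
    by (rule integral_subset_le[OF sub]) (auto intro: integrable_on_subinterval[OF nfi sub] nfi)
  finally show ?thesis using A_eq[OF assms] by simp
qed

end



lemma cont_meas:
  fixes h :: "real \<Rightarrow> complex"
  assumes "continuous_on {0..1} h"
  shows "set_borel_measurable lebesgue {0..1} h"
proof -
  have "set_integrable lebesgue {0..1} h" using absolutely_integrable_continuous_real[OF assms] .
  then show ?thesis unfolding set_integrable_def set_borel_measurable_def by (rule borel_measurable_integrable)
qed

lemma int_sub:
  assumes "set_integrable lebesgue {0..1} (f :: real \<Rightarrow> complex)" "t \<in> {0..1}"
  shows "f integrable_on {0..t}"
proof -
  have "f integrable_on {0..1}" using set_lebesgue_integral_eq_integral(1)[OF assms(1)] .
  then show ?thesis by (rule integrable_on_subinterval) (use assms(2) in auto)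
qed

lemma aeq_integral:
  assumes "aeq f g" "t \<in> {0..1}"
  shows "integral {0..t} f = integral {0..t} g"
proof -
  from assms(1) have "AE x in lebesgue. x \<in> {0..1} \<longrightarrow> f x = g x" unfolding aeq_def .
  then obtain N where N: "{x \<in> space lebesgue. \<not> (x \<in> {0..1} \<longrightarrow> f x = g x)} \<subseteq> N" "emeasure lebesgue N = 0" "N \<in> sets lebesgue"
    by (rule AE_E)
  have "negligible N" using N(2,3) by (simp add: negligible_iff_null_sets null_sets_def)
  then show ?thesis
    by (rule integral_spike[symmetric]) (use N(1) assms(2) in auto)
qed

lemma cont_ae_zero:
  fixes h :: "real \<Rightarrow> complex"
  assumes "continuous_on {0..1} h" "aeq h (\<lambda>_. 0)" "x0 \<in> {0..1}"
  shows "h x0 = 0"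
proof (rule ccontr)
  assume nz: "h x0 \<noteq> 0"
  from assms(2) have "AE x in lebesgue. x \<in> {0..1} \<longrightarrow> h x = 0" unfolding aeq_def .
  then obtain N where N: "{x \<in> space lebesgue. \<not> (x \<in> {0..1} \<longrightarrow> h x = 0)} \<subseteq> N" "emeasure lebesgue N = 0" "N \<in> sets lebesgue"
    by (rule AE_E)
  have negN: "negligible N" using N(2,3) by (simp add: negligible_iff_null_sets null_sets_def)
  obtain d where d: "d > 0" "\<And>x'. x' \<in> {0..1} \<Longrightarrow> dist x' x0 < d \<Longrightarrow> dist (h x') (h x0) < norm (h x0)"
    using assms(1) assms(3) nz unfolding continuous_on_iff by (metis zero_less_norm_iff)
  define a where "a = max 0 (x0 - d/2)"
  define b where "b = min 1 (x0 + d/2)"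
  have ab: "a < b" using d(1) assms(3) by (auto simp: a_def b_def)
  have "{a..b} \<subseteq> N"
  proof
    fix x assume x: "x \<in> {a..b}"
    then have x01: "x \<in> {0..1}" by (auto simp: a_def b_def)
    have "dist x x0 < d" using x d(1) by (auto simp: a_def b_def dist_real_def)
    then have "dist (h x) (h x0) < norm (h x0)" using d(2) x01 by auto
    then have "h x \<noteq> 0" by auto
    then show "x \<in> N" using N(1) x01 by auto
  qed
  then have "negligible {a..b}" using negN negligible_subset by blast
  moreover have "box a b \<noteq> {}" using ab by (simp add: box_real)
  ultimately show False using negligible_interval(1)[of a b] by (simp add: box_real)
qed

lemma zero_integrals:
  fixes f :: "real \<Rightarrow> complex"
  assumes fi: "f integrable_on {0..1}" and z: "\<And>t. t \<in> {0..1} \<Longrightarrow> integral {0..t} f = 0"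
  shows "aeq f (\<lambda>_. 0)"
proof -
  define g where "g = (\<lambda>x. if x \<in> {0..1} then f x else 0)"
  have gU: "g integrable_on UNIV" unfolding g_def using integrable_restrict_UNIV fi by blast
  have "\<And>a b. g integrable_on cbox a b" by (rule integrable_on_subcbox[OF gU]) auto
  then obtain N where N: "negligible N"
    "\<And>x e. \<lbrakk>x \<notin> N; 0 < e\<rbrakk> \<Longrightarrow> \<exists>d>0. \<forall>h. 0 < h \<and> h < d \<longrightarrow>
        norm(integral (cbox x (x + h *\<^sub>R One)) g /\<^sub>R h ^ DIM(real) - g x) < e"
    by (rule integrable_ccontinuous_explicit) blast
  have f0: "f x = 0" if x: "x \<notin> N" "x \<in> {0..<1}" for x
  proof -
    have "norm (f x) < e" if e: "e > 0" for e
    proof -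
      obtain d where d: "d > 0" "\<And>h. 0 < h \<and> h < d \<Longrightarrow>
        norm(integral (cbox x (x + h *\<^sub>R One)) g /\<^sub>R h ^ DIM(real) - g x) < e"
        using N(2)[OF x(1) e] by blast
      define h where "h = min (d/2) ((1 - x)/2)"
      have h1: "h \<le> (1 - x)/2" "h \<le> d/2" unfolding h_def by (rule min.cobounded2, rule min.cobounded1)
      have h: "0 < h" "h < d" "x + h \<le> 1" using d(1) x(2) h1 by (auto simp: h_def)
      have "integral {x..x+h} g = integral {x..x+h} f"
        by (rule integral_cong) (use x(2) h in \<open>auto simp: g_def\<close>)
      also have "\<dots> = integral {0..x+h} f - integral {0..x} f"
      proof -
        have "f integrable_on {0..x+h}" by (rule integrable_on_subinterval[OF fi]) (use h x(2) in auto)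
        from Henstock_Kurzweil_Integration.integral_combine[OF _ _ this, of x] x(2) h
        show ?thesis by (simp add: algebra_simps)
      qed
      also have "\<dots> = 0" using z[of "x+h"] z[of x] x(2) h by auto
      finally have "integral {x..x+h} g = 0" .
      moreover have "cbox x (x + h *\<^sub>R One) = {x..x+h}" by simp
      ultimately have "norm (0 - g x) < e" using d(2)[of h] h by simp
      then show ?thesis using x(2) by (simp add: g_def)
    qed
    then show ?thesis by (metis less_irrefl zero_less_norm_iff)
  qed
  have "negligible (N \<union> {1})" using N(1) by auto
  then have "N \<union> {1} \<in> null_sets lebesgue" by (simp add: negligible_iff_null_sets)
  then show ?thesis unfolding aeq_def
  proof (rule AE_I')
    show "{x \<in> space lebesgue. \<not> (x \<in> {0..1} \<longrightarrow> f x = 0)} \<subseteq> N \<union> {1}"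
    proof (intro subsetI)
      fix x assume "x \<in> {x \<in> space lebesgue. \<not> (x \<in> {0..1} \<longrightarrow> f x = 0)}"
      then have x: "x \<in> {0..1}" "f x \<noteq> 0" by auto
      show "x \<in> N \<union> {1}"
      proof (rule ccontr)
        assume "x \<notin> N \<union> {1}"
        then have "x \<notin> N" "x \<in> {0..<1}" using x(1) by auto
        then show False using f0 x(2) by blast
      qed
    qed
  qed
qed

context phi begin

lemma A_Lp:
  assumes "f \<in> Lp p" "p \<ge> 1" "q \<ge> 1"
  shows "comp_volterra \<phi> f \<in> Lp q" "lpnorm q (comp_volterra \<phi> f) \<le> 2 * lpnorm p f"
proof -
  have fi: "set_integrable lebesgue {0..1} f" by (rule Lp_integrable[OF assms(1,2)])
  have m: "set_borel_measurable lebesgue {0..1} (comp_volterra \<phi> f)" by (rule cont_meas[OF A_cont[OF fi]])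
  show "comp_volterra \<phi> f \<in> Lp q" by (rule Lp_bounded[OF m A_bound[OF fi]]) (use assms in auto)
  have "lpnorm q (comp_volterra \<phi> f) \<le> integral {0..1} (\<lambda>y. norm (f y))"
    by (rule lpnorm_le[OF m A_bound[OF fi] assms(3)])
  also have "\<dots> \<le> 2 * lpnorm p f" by (rule L1_le_Lp[OF assms(1,2)])
  finally show "lpnorm q (comp_volterra \<phi> f) \<le> 2 * lpnorm p f" .
qed

lemma A_wd:
  assumes "set_integrable lebesgue {0..1} f" "set_integrable lebesgue {0..1} g" "aeq f g"
  shows "aeq (comp_volterra \<phi> f) (comp_volterra \<phi> g)"
  unfolding aeq_def
  by (rule AE_I2) (use assms in \<open>auto simp: A_eq intro!: aeq_integral phi_range\<close>)

lemma A_lin: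
  assumes f: "set_integrable lebesgue {0..1} f" and g: "set_integrable lebesgue {0..1} g"
  shows "aeq (comp_volterra \<phi> (\<lambda>x. a * f x + b * g x)) (\<lambda>x. a * comp_volterra \<phi> f x + b * comp_volterra \<phi> g x)"
  unfolding aeq_def
proof (rule AE_I2, intro impI)
  fix x :: real assume x: "x \<in> {0..1}"
  have fg: "set_integrable lebesgue {0..1} (\<lambda>x. a * f x + b * g x)"
    using f g by (intro set_integral_add) auto
  have t: "\<phi> x \<in> {0..1}" using phi_range[OF x] .
  show "comp_volterra \<phi> (\<lambda>x. a * f x + b * g x) x = a * comp_volterra \<phi> f x + b * comp_volterra \<phi> g x"
    unfolding A_eq[OF fg x] A_eq[OF f x] A_eq[OF g x]
    by (subst integral_add) (auto intro!: integrable_on_mult_right int_sub[OF f t] int_sub[OF g t])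
qed

lemma A_bounded_op:
  assumes "p \<ge> 1" "q \<ge> 1"
  shows "bounded_op p q (comp_volterra \<phi>)"
  unfolding bounded_op_def
proof (intro conjI)
  show "\<forall>f\<in>Lp p. comp_volterra \<phi> f \<in> Lp q" using A_Lp(1)[OF _ assms] by blast
  show "\<forall>f\<in>Lp p. \<forall>g\<in>Lp p. aeq f g \<longrightarrow> aeq (comp_volterra \<phi> f) (comp_volterra \<phi> g)"
    using A_wd Lp_integrable[OF _ assms(1)] by blast
  show "\<forall>f\<in>Lp p. \<forall>g\<in>Lp p. \<forall>a b. aeq (comp_volterra \<phi> (\<lambda>x. a * f x + b * g x))
     (\<lambda>x. a * comp_volterra \<phi> f x + b * comp_volterra \<phi> g x)"
    using A_lin Lp_integrable[OF _ assms(1)] by blast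
  show "\<exists>C. \<forall>f\<in>Lp p. lpnorm q (comp_volterra \<phi> f) \<le> C * lpnorm p f"
    using A_Lp(2)[OF _ assms] by blast
qed

lemma A_injective:
  assumes "p \<ge> 1"
  shows "injective_op p (comp_volterra \<phi>)"
  unfolding injective_op_def
proof (intro ballI impI)
  fix f assume f: "f \<in> Lp p" and z: "aeq (comp_volterra \<phi> f) (\<lambda>_. 0)"
  have fi: "set_integrable lebesgue {0..1} f" by (rule Lp_integrable[OF f assms])
  show "aeq f (\<lambda>_. 0)"
  proof (rule zero_integrals)
    show "f integrable_on {0..1}" using set_lebesgue_integral_eq_integral(1)[OF fi] .
    fix t :: real assume t: "t \<in> {0..1}"
    then obtain x where x: "x \<in> {0..1}" "\<phi> x = t" using phi_surj by blast
    have "comp_volterra \<phi> f x = 0" by (rule cont_ae_zero[OF A_cont[OF fi] z x(1)])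
    then show "integral {0..t} f = 0" using A_eq[OF fi x(1)] x(2) by simp
  qed
qed

end



lemma sbm_diff:
  fixes a b :: "real \<Rightarrow> complex"
  assumes "set_borel_measurable lebesgue S a" "set_borel_measurable lebesgue S b"
  shows "set_borel_measurable lebesgue S (\<lambda>x. a x - b x)"
proof -
  have "(\<lambda>x. indicator S x *\<^sub>R a x - indicator S x *\<^sub>R b x) \<in> borel_measurable lebesgue"
    using assms unfolding set_borel_measurable_def by (rule borel_measurable_diff)
  then show ?thesis unfolding set_borel_measurable_def by (simp add: scaleR_diff_right)
qed

lemma sbm_normpowr:
  fixes h :: "real \<Rightarrow> complex"
  assumes "set_borel_measurable lebesgue S h"
  shows "set_borel_measurable lebesgue S (\<lambda>x. norm (h x) powr q)"
proof -
  have "(\<lambda>x. norm (indicator S x *\<^sub>R h x) powr q) \<in> borel_measurable lebesgue"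
    using assms unfolding set_borel_measurable_def by measurable
  moreover have "(\<lambda>x. norm (indicator S x *\<^sub>R h x) powr q) = (\<lambda>x. indicator S x *\<^sub>R (norm (h x) powr q))"
    by (auto simp: indicator_def)
  ultimately show ?thesis unfolding set_borel_measurable_def by simp
qed

lemma tri3:
  fixes x y z :: complex assumes "q \<ge> 1"
  shows "norm (x + y + z) powr q \<le> 3 powr q * (norm x powr q + norm y powr q + norm z powr q)"
proof -
  define M where "M = max (norm x) (max (norm y) (norm z))"
  have M0: "M \<ge> 0" by (simp add: M_def le_max_iff_disj)
  have "norm (x + y + z) \<le> norm x + norm y + norm z" by (metis norm_triangle_ineq add_right_mono order_trans)
  also have "\<dots> \<le> 3 * M" by (simp add: M_def)
  finally have "norm (x + y + z) powr q \<le> (3 * M) powr q" using assms by (intro powr_mono2) auto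
  also have "\<dots> = 3 powr q * M powr q" using M0 by (simp add: powr_mult)
  also have "M powr q \<le> norm x powr q + norm y powr q + norm z powr q"
    unfolding M_def by (auto simp: max_def)
  then have "3 powr q * M powr q \<le> 3 powr q * (norm x powr q + norm y powr q + norm z powr q)"
    by (intro mult_left_mono) auto
  finally show ?thesis .
qed

lemma close3:
  fixes a b c d :: "real \<Rightarrow> complex"
  assumes q: "q \<ge> 1" and e: "e > 0" and de: "3 powr q * (3 * \<delta>) \<le> e powr q"
    and m: "set_borel_measurable lebesgue {0..1} a" "set_borel_measurable lebesgue {0..1} d"
    and i1: "set_integrable lebesgue {0..1} (\<lambda>x. norm (a x - b x) powr q)"
    and i2: "set_integrable lebesgue {0..1} (\<lambda>x. norm (b x - c x) powr q)"
    and i3: "set_integrable lebesgue {0..1} (\<lambda>x. norm (c x - d x) powr q)"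
    and l1: "(LINT x:{0..1}|lebesgue. norm (a x - b x) powr q) < \<delta>"
    and l2: "(LINT x:{0..1}|lebesgue. norm (b x - c x) powr q) < \<delta>"
    and l3: "(LINT x:{0..1}|lebesgue. norm (c x - d x) powr q) < \<delta>"
  shows "lpnorm q (\<lambda>x. a x - d x) < e"
proof -
  let ?s = "\<lambda>x. 3 powr q * (norm (a x - b x) powr q + norm (b x - c x) powr q + norm (c x - d x) powr q)"
  have iS: "set_integrable lebesgue {0..1} ?s"
    by (intro set_integrable_mult_right set_integral_add(1) i1 i2 i3)
  have md: "set_borel_measurable lebesgue {0..1} (\<lambda>x. norm (a x - d x) powr q)"
    by (intro sbm_normpowr sbm_diff m)
  have pw: "norm (a x - d x) powr q \<le> ?s x" for x
    using tri3[OF q, of "a x - b x" "b x - c x" "c x - d x"] by simp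
  have id: "set_integrable lebesgue {0..1} (\<lambda>x. norm (a x - d x) powr q)"
  proof (rule set_integrable_bound[OF iS md])
    show "AE x\<in>{0..1} in lebesgue. norm (norm (a x - d x) powr q) \<le> norm (?s x)"
      by (rule AE_I2) (use pw in \<open>auto intro: order_trans[OF _ abs_ge_self]\<close>)
  qed
  have I0: "(LINT x:{0..1}|lebesgue. norm (a x - d x) powr q) \<ge> 0"
    unfolding set_lebesgue_integral_def by (rule integral_nonneg_AE) (auto simp: indicator_def)
  have "(LINT x:{0..1}|lebesgue. norm (a x - d x) powr q) \<le> (LINT x:{0..1}|lebesgue. ?s x)"
    by (rule set_integral_mono[OF id iS pw])
  also have "\<dots> = 3 powr q * ((LINT x:{0..1}|lebesgue. norm (a x - b x) powr q) + (LINT x:{0..1}|lebesgue. norm (b x - c x) powr q) + (LINT x:{0..1}|lebesgue. norm (c x - d x) powr q))"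
    using i1 i2 i3 by (simp add: set_integral_add(2))
  also have "\<dots> < 3 powr q * (3 * \<delta>)"
    using l1 l2 l3 by (intro mult_strict_left_mono) auto
  also have "\<dots> \<le> e powr q" by (rule de)
  finally have lt: "(LINT x:{0..1}|lebesgue. norm (a x - d x) powr q) < e powr q" .
  have "lpnorm q (\<lambda>x. a x - d x) < (e powr q) powr (1/q)"
    unfolding lpnorm_def by (rule powr_less_mono2) (use q I0 lt in auto)
  also have "\<dots> = e powr (q * (1/q))" by (rule powr_powr)
  also have "\<dots> = e" using q e by simp
  finally show ?thesis .
qed




lemma trunc:
  fixes g :: "real \<Rightarrow> complex"
  assumes g: "g \<in> Lp q" and q: "q \<ge> 1" and d: "\<delta> > 0"
  obtains n :: nat where "n > 0"
    "set_integrable lebesgue {0..1} (\<lambda>x. norm ((if 1/real n \<le> x \<and> norm (g x) \<le> real n then g x else 0) - g x) powr q)"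
    "(LINT x:{0..1}|lebesgue. norm ((if 1/real n \<le> x \<and> norm (g x) \<le> real n then g x else 0) - g x) powr q) < \<delta>"
proof -
  define G where "G x = indicator {0..1} x *\<^sub>R g x" for x
  have Gm[measurable]: "G \<in> borel_measurable lebesgue"
    using g unfolding Lp_def set_borel_measurable_def G_def by auto
  define s where "s i x = norm ((if 1/real (Suc i) \<le> x \<and> norm (G x) \<le> real (Suc i) then G x else 0) - G x) powr q" for i x
  define w where "w x = norm (G x) powr q" for x
  have "(\<lambda>x. indicator {0..1} x *\<^sub>R (norm (g x) powr q)) = w"
    by (auto simp: w_def G_def indicator_def)
  then have wi: "integrable lebesgue w"
    using g unfolding Lp_def set_integrable_def by auto
  have idm: "(\<lambda>x::real. x) \<in> borel_measurable lebesgue" by (rule measurable_completion) simp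
  have cm: "(\<lambda>x::real. q) \<in> borel_measurable lebesgue" by simp
  note [measurable] = Gm idm cm
  have sm: "s i \<in> borel_measurable lebesgue" for i unfolding s_def by measurable
  have s_eq: "s i x = (if 1/real (Suc i) \<le> x \<and> norm (G x) \<le> real (Suc i) then 0 else w x)" for i x
    unfolding s_def w_def by simp
  have w0: "w x \<ge> 0" for x unfolding w_def by simp
  have sb: "norm (s i x) \<le> w x" for i x
    unfolding s_eq using w0[of x] by simp
  have ev: "eventually (\<lambda>i. s i x = 0) sequentially" if x: "x \<noteq> 0" for x
  proof (cases "x > 0")
    case True
    obtain N :: nat where N: "max (1/x) (norm (G x)) \<le> real N" using real_arch_simple by blast
    show ?thesis unfolding eventually_sequentially
    proof (intro exI allI impI)
      fix i assume i: "N \<le> i"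
      then have "1/x \<le> real (Suc i)" "norm (G x) \<le> real (Suc i)" using N by auto
      then have "1/real (Suc i) \<le> x" using True by (simp add: field_simps)
      then show "s i x = 0" using \<open>norm (G x) \<le> real (Suc i)\<close> by (simp add: s_def)
    qed
  next
    case False
    then have "G x = 0" using x by (auto simp: G_def)
    then show ?thesis by (simp add: s_def)
  qed
  have ae: "AE x in lebesgue. (\<lambda>i. s i x) \<longlonglongrightarrow> 0"
  proof (rule AE_I')
    show "{0::real} \<in> null_sets lebesgue" by simp
    show "{x \<in> space lebesgue. \<not> (\<lambda>i. s i x) \<longlonglongrightarrow> 0} \<subseteq> {0}"
    proof (intro subsetI)
      fix x assume x: "x \<in> {x \<in> space lebesgue. \<not> (\<lambda>i. s i x) \<longlonglongrightarrow> 0}"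
      show "x \<in> {0}"
      proof (rule ccontr)
        assume "x \<notin> {0}"
        then have "(\<lambda>i. s i x) \<longlonglongrightarrow> 0" using tendsto_eventually[OF ev[of x]] by simp
        then show False using x by simp
      qed
    qed
  qed
  have "(\<lambda>i. integral\<^sup>L lebesgue (s i)) \<longlonglongrightarrow> integral\<^sup>L lebesgue (\<lambda>x::real. 0::real)"
  proof (rule integral_dominated_convergence[where w=w])
    show "AE x in lebesgue. (\<lambda>i. s i x) \<longlonglongrightarrow> 0" by (rule ae)
  qed (use sm wi sb in auto)
  then obtain N where N: "\<And>i. i \<ge> N \<Longrightarrow> norm (integral\<^sup>L lebesgue (s i) - 0) < \<delta>"
    using LIMSEQ_D[OF _ d] by fastforce
  have si: "integrable lebesgue (s N)"
    by (rule Bochner_Integration.integrable_bound[OF wi sm], rule AE_I2) (use sb w0 in \<open>auto intro: order_trans[OF _ abs_ge_self]\<close>)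
  have eq: "(\<lambda>x. indicator {0..1} x *\<^sub>R norm ((if 1/real (Suc N) \<le> x \<and> norm (g x) \<le> real (Suc N) then g x else 0) - g x) powr q) = s N"
    by (auto simp: s_def G_def indicator_def)
  show ?thesis
  proof (rule that[of "Suc N"])
    show "set_integrable lebesgue {0..1} (\<lambda>x. norm ((if 1/real (Suc N) \<le> x \<and> norm (g x) \<le> real (Suc N) then g x else 0) - g x) powr q)"
      unfolding set_integrable_def eq by (rule si)
    show "(LINT x:{0..1}|lebesgue. norm ((if 1/real (Suc N) \<le> x \<and> norm (g x) \<le> real (Suc N) then g x else 0) - g x) powr q) < \<delta>"
      unfolding set_lebesgue_integral_def eq using N[of N] by simp
  qed simp
qed




lemma average:
  fixes g1 :: "real \<Rightarrow> complex" and n :: nat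
  assumes q: "q \<ge> 1" and d: "\<delta> > 0" and n: "n > 0"
    and m: "set_borel_measurable lebesgue {0..1} g1"
    and b: "\<And>x. x \<in> {0..1} \<Longrightarrow> norm (g1 x) \<le> real n"
    and z: "\<And>x. x \<in> {0..1} \<Longrightarrow> x < 1/real n \<Longrightarrow> g1 x = 0"
  obtains u where "continuous_on {0..1} u" "u 0 = 0" "\<And>x. x \<in> {0..1} \<Longrightarrow> norm (u x) \<le> real n"
    "set_integrable lebesgue {0..1} (\<lambda>x. norm (u x - g1 x) powr q)"
    "(LINT x:{0..1}|lebesgue. norm (u x - g1 x) powr q) < \<delta>"
proof -
  have g1i: "set_integrable lebesgue {0..1} g1"
  proof (rule set_integrable_bound[OF _ m])
    show "set_integrable lebesgue {0..1::real} (\<lambda>x. real n)" by (rule absolutely_integrable_on_const) auto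
    show "AE x\<in>{0..1} in lebesgue. norm (g1 x) \<le> norm (real n)" by (rule AE_I2) (use b in auto)
  qed
  define G where "G x = (if x \<in> {0..1} then g1 x else 0)" for x
  have GU: "G integrable_on UNIV" unfolding G_def
    using integrable_restrict_UNIV set_lebesgue_integral_eq_integral(1)[OF g1i] by blast
  have Gc: "G integrable_on cbox a b" for a b by (rule integrable_on_subcbox[OF GU]) auto
  have Gb: "norm (G x) \<le> real n" for x using b by (auto simp: G_def)
  define c where "c k = real (k + n + 1)" for k :: nat
  define h where "h k = 1 / c k" for k
  have c0: "c k > 0" for k by (simp add: c_def)
  have c1: "c k \<ge> 1" "c k > real n" for k by (simp_all add: c_def)
  have h0: "h k > 0" "h k \<le> 1" "h k < 1 / real n" for k
  proof -
    show "h k > 0" using c0[of k] by (simp add: h_def)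
    show "h k \<le> 1" using c1(1)[of k] by (simp add: h_def)
    show "h k < 1 / real n" unfolding h_def
      by (rule divide_strict_left_mono) (use c1(2)[of k] n c0[of k] in auto)
  qed
  have hc: "c k * h k = 1" for k using c0[of k] by (simp add: h_def)
  define u where "u k x = complex_of_real (c k) * integral {x..x + h k} G" for k x
  have ucont: "continuous_on {0..1} (u k)" for k
  proof -
    define F where "F t = integral {-1..t} G" for t
    have Fc: "continuous_on {-1..3} F" unfolding F_def
      by (rule indefinite_integral_continuous_1) (use Gc[of "-1" 3] in \<open>simp add: cbox_interval\<close>)
    have eq: "integral {x..x + h k} G = F (x + h k) - F x" if x: "x \<in> {0..1}" for x
    proof -
      have "G integrable_on {-1..x + h k}" using Gc[of "-1" "x + h k"] by (simp add: cbox_interval)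
      from Henstock_Kurzweil_Integration.integral_combine[OF _ _ this, of x] x h0[of k]
      show ?thesis by (simp add: F_def algebra_simps)
    qed
    have "continuous_on {0..1} (\<lambda>x. complex_of_real (c k) * (F (x + h k) - F x))"
    proof (intro continuous_intros)
      show "continuous_on {0..1} (\<lambda>x. F (x + h k))"
        by (rule continuous_on_compose2[OF Fc]) (use h0[of k] in \<open>auto intro!: continuous_intros\<close>)
      show "continuous_on {0..1} F" by (rule continuous_on_subset[OF Fc]) auto
    qed
    then show ?thesis
      by (rule continuous_on_cong[THEN iffD1, rotated 2]) (auto simp: u_def eq)
  qed
  have u0: "u k 0 = 0" for k
  proof -
    have "integral {0..h k} G = integral {0..h k} (\<lambda>_. 0::complex)"
      by (rule integral_cong) (use h0[of k] z in \<open>auto simp: G_def\<close>)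
    then show ?thesis by (simp add: u_def)
  qed
  have ub: "norm (u k x) \<le> real n" for k x
  proof -
    have "norm (integral (cbox x (x + h k)) G) \<le> real n * Henstock_Kurzweil_Integration.content (cbox x (x + h k))"
      by (rule Henstock_Kurzweil_Integration.integrable_bound[OF _ Gc]) (use Gb in auto)
    also have "\<dots> = real n * h k" using h0[of k] by simp
    finally have "norm (integral {x..x + h k} G) \<le> real n * h k" by (simp add: cbox_interval)
    then have "c k * norm (integral {x..x + h k} G) \<le> c k * (real n * h k)"
      using c0[of k] by (intro mult_left_mono) auto
    also have "\<dots> = real n" using hc[of k] by (simp add: algebra_simps)
    finally show ?thesis using c0[of k] by (simp add: u_def norm_mult)
  qed
  obtain N where N: "negligible N"
    "\<And>x e. \<lbrakk>x \<notin> N; 0 < e\<rbrakk> \<Longrightarrow> \<exists>d>0. \<forall>hh. 0 < hh \<and> hh < d \<longrightarrow>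
        norm(integral (cbox x (x + hh *\<^sub>R One)) G /\<^sub>R hh ^ DIM(real) - G x) < e"
    by (rule integrable_ccontinuous_explicit[of G]) (use Gc in blast)+
  have conv: "(\<lambda>k. u k x) \<longlonglongrightarrow> G x" if x: "x \<notin> N" for x
  proof (rule LIMSEQ_I)
    fix r :: real assume r: "r > 0"
    obtain dd where dd: "dd > 0" "\<And>hh. 0 < hh \<and> hh < dd \<Longrightarrow>
        norm(integral (cbox x (x + hh *\<^sub>R One)) G /\<^sub>R hh ^ DIM(real) - G x) < r"
      using N(2)[OF x r] by blast
    obtain K :: nat where K: "1 / dd < real K" using reals_Archimedean2 by blast
    show "\<exists>K. \<forall>k\<ge>K. norm (u k x - G x) < r"
    proof (intro exI allI impI)
      fix k assume k: "K \<le> k"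
      have "1 / dd < c k" using K k by (simp add: c_def)
      then have "h k < dd" using dd(1) c0[of k] by (simp add: h_def field_simps)
      then have "norm(integral (cbox x (x + h k *\<^sub>R One)) G /\<^sub>R h k ^ DIM(real) - G x) < r"
        using dd(2) h0(1)[of k] by blast
      moreover have "integral (cbox x (x + h k *\<^sub>R One)) G /\<^sub>R h k ^ DIM(real) = u k x"
        using hc[of k] c0[of k] by (simp add: u_def cbox_interval h_def scaleR_conv_of_real)
      ultimately show "norm (u k x - G x) < r" by simp
    qed
  qed
  define s where "s k x = indicator {0..1} x *\<^sub>R (norm (u k x - g1 x) powr q)" for k x
  define w where "w x = indicator {0..1} x *\<^sub>R ((2 * real n) powr q)" for x :: real
  have sm: "s k \<in> borel_measurable lebesgue" for k
    using sbm_normpowr[OF sbm_diff[OF cont_meas[OF ucont] m]] unfolding set_borel_measurable_def s_def .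
  have wi: "integrable lebesgue w"
    using absolutely_integrable_on_const[of "{0..1::real}" "(2 * real n) powr q"]
    unfolding set_integrable_def w_def by simp
  have sb: "norm (s k x) \<le> w x" for k x
  proof (cases "x \<in> {0..1}")
    case True
    have "norm (u k x - g1 x) \<le> norm (u k x) + norm (g1 x)" by (rule norm_triangle_ineq4)
    also have "\<dots> \<le> 2 * real n" using ub[of k x] b[OF True] by simp
    finally have "norm (u k x - g1 x) powr q \<le> (2 * real n) powr q" using q by (intro powr_mono2) auto
    then show ?thesis using True by (simp add: s_def w_def)
  qed (simp add: s_def w_def)
  have ae: "AE x in lebesgue. (\<lambda>k. s k x) \<longlonglongrightarrow> 0"
  proof (rule AE_I')
    show "N \<in> null_sets lebesgue" using N(1) by (simp add: negligible_iff_null_sets)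
    show "{x \<in> space lebesgue. \<not> (\<lambda>k. s k x) \<longlonglongrightarrow> 0} \<subseteq> N"
    proof (intro subsetI)
      fix x assume x: "x \<in> {x \<in> space lebesgue. \<not> (\<lambda>k. s k x) \<longlonglongrightarrow> 0}"
      show "x \<in> N"
      proof (rule ccontr)
        assume xN: "x \<notin> N"
        have "(\<lambda>k. s k x) \<longlonglongrightarrow> 0"
        proof (cases "x \<in> {0..1}")
          case True
          have "(\<lambda>k. u k x - g1 x) \<longlonglongrightarrow> 0"
            using conv[OF xN] True by (simp add: G_def LIM_zero)
          then have "(\<lambda>k. norm (u k x - g1 x)) \<longlonglongrightarrow> 0" by (rule tendsto_norm_zero)
          then have "(\<lambda>k. norm (u k x - g1 x) powr q) \<longlonglongrightarrow> 0 powr q"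
            by (rule tendsto_powr') (use q in auto)
          then show ?thesis using True q by (simp add: s_def)
        qed (simp add: s_def)
        then show False using x by simp
      qed
    qed
  qed
  have "(\<lambda>k. integral\<^sup>L lebesgue (s k)) \<longlonglongrightarrow> integral\<^sup>L lebesgue (\<lambda>x::real. 0::real)"
  proof (rule integral_dominated_convergence[where w=w])
    show "AE x in lebesgue. (\<lambda>k. s k x) \<longlonglongrightarrow> 0" by (rule ae)
  qed (use sm wi sb in auto)
  then obtain K where K: "\<And>k. k \<ge> K \<Longrightarrow> norm (integral\<^sup>L lebesgue (s k) - 0) < \<delta>"
    using LIMSEQ_D[OF _ d] by fastforce
  have w0: "w x \<ge> 0" for x by (simp add: w_def)
  have si: "integrable lebesgue (s K)"
    by (rule Bochner_Integration.integrable_bound[OF wi sm], rule AE_I2) (use sb w0 in \<open>auto intro: order_trans[OF _ abs_ge_self]\<close>)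
  show ?thesis
  proof (rule that[of "u K"])
    show "continuous_on {0..1} (u K)" by (rule ucont)
    show "u K 0 = 0" by (rule u0)
    show "\<And>x. x \<in> {0..1} \<Longrightarrow> norm (u K x) \<le> real n" using ub by blast
    show "set_integrable lebesgue {0..1} (\<lambda>x. norm (u K x - g1 x) powr q)"
      using si unfolding set_integrable_def s_def .
    have "integral\<^sup>L lebesgue (s K) < \<delta>" using K[of K] by simp
    then show "(LINT x:{0..1}|lebesgue. norm (u K x - g1 x) powr q) < \<delta>"
      unfolding set_lebesgue_integral_def s_def .
  qed
qed




lemma int_le_const:
  fixes h :: "real \<Rightarrow> complex"
  assumes "set_borel_measurable lebesgue {0..1} h" "\<And>x. x \<in> {0..1} \<Longrightarrow> norm (h x) \<le> B" "q \<ge> 1"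
  shows "set_integrable lebesgue {0..1} (\<lambda>x. norm (h x) powr q)"
    "(LINT x:{0..1}|lebesgue. norm (h x) powr q) \<le> B powr q"
proof -
  have B: "B \<ge> 0" using assms(2)[of 0] by (smt (verit) atLeastAtMost_iff norm_ge_zero)
  have hq: "h \<in> Lp q" by (rule Lp_bounded[OF assms(1,2)]) (use assms(3) in auto)
  then show "set_integrable lebesgue {0..1} (\<lambda>x. norm (h x) powr q)" unfolding Lp_def by auto
  then have eq: "(LINT x:{0..1}|lebesgue. norm (h x) powr q) = integral {0..1} (\<lambda>y. norm (h y) powr q)"
    by (rule set_lebesgue_integral_eq_integral(2))
  note P = Lp_powr_integral[OF hq]
  have "integral {0..1} (\<lambda>y. norm (h y) powr q) \<le> integral {0..1} (\<lambda>y::real. B powr q)"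
    using P(1) apply (rule integral_le)
    using assms B by (auto intro!: powr_mono2)
  then show "(LINT x:{0..1}|lebesgue. norm (h x) powr q) \<le> B powr q" unfolding eq by simp
qed

lemma g1_meas:
  fixes g :: "real \<Rightarrow> complex"
  assumes "g \<in> Lp q"
  shows "set_borel_measurable lebesgue {0..1} (\<lambda>x. if 1/real n \<le> x \<and> norm (g x) \<le> real n then g x else 0)"
proof -
  define G where "G x = indicator {0..1} x *\<^sub>R g x" for x
  have Gm: "G \<in> borel_measurable lebesgue"
    using assms unfolding Lp_def set_borel_measurable_def G_def by auto
  have idm: "(\<lambda>x::real. x) \<in> borel_measurable lebesgue" by (rule measurable_completion) simp
  note [measurable] = Gm idm
  have "(\<lambda>x. if 1/real n \<le> x \<and> norm (G x) \<le> real n then G x else 0) \<in> borel_measurable lebesgue"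
    by measurable
  moreover have "(\<lambda>x. if 1/real n \<le> x \<and> norm (G x) \<le> real n then G x else 0) =
     (\<lambda>x. indicator {0..1} x *\<^sub>R (if 1/real n \<le> x \<and> norm (g x) \<le> real n then g x else 0))"
    by (auto simp: G_def indicator_def)
  ultimately show ?thesis unfolding set_borel_measurable_def by simp
qed

context phi begin

lemma poly_approx:
  assumes u: "continuous_on {0..1} u" "u 0 = 0" and e: "\<epsilon> > 0" and p: "p \<ge> 1"
  obtains f where "f \<in> Lp p" "\<And>x. x \<in> {0..1} \<Longrightarrow> norm (comp_volterra \<phi> f x - u x) < \<epsilon>"
proof -
  define \<psi> where "\<psi> = inv_into {0..1} \<phi>"
  have inj: "inj_on \<phi> {0..1}" by (rule strict_mono_on_imp_inj_on[OF mono])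
  have psiphi: "\<psi> (\<phi> x) = x" if "x \<in> {0..1}" for x unfolding \<psi>_def by (rule inv_into_f_f[OF inj that])
  have img: "\<phi> ` {0..1} = {0..1}"
  proof
    show "\<phi> ` {0..1} \<subseteq> {0..1}" using phi_range by auto
    show "{0..1} \<subseteq> \<phi> ` {0..1}" using phi_surj by force
  qed
  have psic: "continuous_on {0..1} \<psi>"
    using continuous_on_inv[OF cont compact_Icc, of \<psi>] psiphi img by auto
  have psir: "\<psi> t \<in> {0..1}" if "t \<in> {0..1}" for t
    using that img unfolding \<psi>_def by (metis inv_into_into)
  define v where "v t = u (\<psi> t)" for t
  have vc: "continuous_on {0..1} v" unfolding v_def
    by (rule continuous_on_compose2[OF u(1) psic]) (use psir in auto)
  have v0: "v 0 = 0" using psiphi[of 0] phi0 u(2) by (simp add: v_def)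
  obtain P where P: "polynomial_function P" "\<And>t. t \<in> {0..1} \<Longrightarrow> norm (v t - P t) < \<epsilon>/2"
    using Stone_Weierstrass_polynomial_function[OF compact_Icc vc, of "\<epsilon>/2"] e by auto
  obtain P' where P': "polynomial_function P'" "\<And>x. (P has_vector_derivative P' x) (at x)"
    using has_vector_derivative_polynomial_function[OF P(1)] by blast
  have P'c: "continuous_on {0..1} P'" by (rule continuous_on_polymonial_function[OF P'(1)])
  obtain B where B: "\<And>x. x \<in> {0..1} \<Longrightarrow> norm (P' x) \<le> B"
    using compact_imp_bounded[OF compact_continuous_image[OF P'c compact_Icc]] unfolding bounded_iff by blast
  have fL: "P' \<in> Lp p" by (rule Lp_bounded[OF cont_meas[OF P'c] B]) (use p in auto)
  have fi: "set_integrable lebesgue {0..1} P'" by (rule Lp_integrable[OF fL p])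
  show ?thesis
  proof (rule that[OF fL])
    fix x :: real assume x: "x \<in> {0..1}"
    have t: "\<phi> x \<in> {0..1}" by (rule phi_range[OF x])
    have "(P' has_integral P (\<phi> x) - P 0) {0..\<phi> x}"
      by (rule fundamental_theorem_of_calculus) (use t P'(2) in \<open>auto intro: has_vector_derivative_at_within\<close>)
    then have Aeq: "comp_volterra \<phi> P' x = P (\<phi> x) - P 0"
      using A_eq[OF fi x] by (simp add: integral_unique)
    have "u x = v (\<phi> x)" using psiphi[OF x] by (simp add: v_def)
    then have "comp_volterra \<phi> P' x - u x = (P (\<phi> x) - v (\<phi> x)) + (v 0 - P 0)"
      using Aeq v0 by simp
    then have "norm (comp_volterra \<phi> P' x - u x) \<le> norm (v (\<phi> x) - P (\<phi> x)) + norm (v 0 - P 0)"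
      by (metis norm_minus_commute norm_triangle_ineq)
    also have "\<dots> < \<epsilon>/2 + \<epsilon>/2" using P(2)[OF t] P(2)[of 0] by (intro add_strict_mono) auto
    finally show "norm (comp_volterra \<phi> P' x - u x) < \<epsilon>" by simp
  qed
qed

lemma A_dense:
  assumes p: "p \<ge> 1" and q: "q \<ge> 1"
  shows "dense_range_op p q (comp_volterra \<phi>)"
  unfolding dense_range_op_def
proof (intro ballI allI impI)
  fix g and e :: real assume g: "g \<in> Lp q" and e: "e > 0"
  define \<delta> where "\<delta> = e powr q / (9 * 3 powr q)"
  have d: "\<delta> > 0" using e by (simp add: \<delta>_def)
  have de: "3 powr q * (3 * \<delta>) \<le> e powr q" using e by (simp add: \<delta>_def field_simps)
  obtain n :: nat where n: "n > 0"
    and i3: "set_integrable lebesgue {0..1} (\<lambda>x. norm ((if 1/real n \<le> x \<and> norm (g x) \<le> real n then g x else 0) - g x) powr q)"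
    and l3: "(LINT x:{0..1}|lebesgue. norm ((if 1/real n \<le> x \<and> norm (g x) \<le> real n then g x else 0) - g x) powr q) < \<delta>"
    by (rule trunc[OF g q d])
  define g1 where "g1 x = (if 1/real n \<le> x \<and> norm (g x) \<le> real n then g x else 0)" for x
  have g1m: "set_borel_measurable lebesgue {0..1} g1" unfolding g1_def by (rule g1_meas[OF g])
  have g1b: "norm (g1 x) \<le> real n" for x by (simp add: g1_def)
  have g1z: "g1 x = 0" if "x < 1/real n" for x using that by (simp add: g1_def)
  obtain u where uc: "continuous_on {0..1} u" and u0: "u 0 = 0"
    and i2: "set_integrable lebesgue {0..1} (\<lambda>x. norm (u x - g1 x) powr q)"
    and l2: "(LINT x:{0..1}|lebesgue. norm (u x - g1 x) powr q) < \<delta>"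
    by (rule average[OF q d n g1m g1b g1z]) blast+
  define \<epsilon> where "\<epsilon> = (\<delta>/2) powr (1/q)"
  have ep: "\<epsilon> > 0" using d by (simp add: \<epsilon>_def)
  have epq: "\<epsilon> powr q = \<delta>/2" using d q by (simp add: \<epsilon>_def powr_powr)
  obtain f where f: "f \<in> Lp p" "\<And>x. x \<in> {0..1} \<Longrightarrow> norm (comp_volterra \<phi> f x - u x) < \<epsilon>"
    using poly_approx[OF uc u0 ep p] by blast
  have fi: "set_integrable lebesgue {0..1} f" by (rule Lp_integrable[OF f(1) p])
  have Am: "set_borel_measurable lebesgue {0..1} (comp_volterra \<phi> f)" by (rule cont_meas[OF A_cont[OF fi]])
  have dm: "set_borel_measurable lebesgue {0..1} (\<lambda>x. comp_volterra \<phi> f x - u x)"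
    by (rule sbm_diff[OF Am cont_meas[OF uc]])
  note I1 = int_le_const[OF dm less_imp_le[OF f(2)] q]
  have l1: "(LINT x:{0..1}|lebesgue. norm (comp_volterra \<phi> f x - u x) powr q) < \<delta>"
    using I1(2) epq d by simp
  have gm: "set_borel_measurable lebesgue {0..1} g" using g unfolding Lp_def by auto
  have "lpnorm q (\<lambda>x. comp_volterra \<phi> f x - g x) < e"
    by (rule close3[OF q e de Am gm I1(1) i2 _ l1 l2]) (use i3 l3 in \<open>simp_all add: g1_def\<close>)
  then show "\<exists>f\<in>Lp p. lpnorm q (\<lambda>x. comp_volterra \<phi> f x - g x) < e" using f(1) by blast
qed

end



context phi begin
lemma eig:
  assumes p: "p \<ge> 1" and q: "q \<ge> 1" and c: "c \<in> point_spectrum p (comp_volterra \<phi>)"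
  shows "c \<in> point_spectrum q (comp_volterra \<phi>)"
proof -
  obtain f where f: "f \<in> Lp p" "\<not> aeq f (\<lambda>_. 0)" "aeq (comp_volterra \<phi> f) (\<lambda>x. c * f x)"
    using c unfolding point_spectrum_def by blast
  define g where "g = comp_volterra \<phi> f"
  have gL: "g \<in> Lp q" unfolding g_def by (rule A_Lp(1)[OF f(1) p q])
  have fi: "set_integrable lebesgue {0..1} f" by (rule Lp_integrable[OF f(1) p])
  have gi: "set_integrable lebesgue {0..1} g" by (rule Lp_integrable[OF gL q])
  have gnz: "\<not> aeq g (\<lambda>_. 0)"
    using A_injective[OF p] f(1,2) unfolding injective_op_def g_def by blast
  have "aeq (comp_volterra \<phi> g) (\<lambda>x. c * g x)"
    unfolding aeq_def
  proof (rule AE_I2, intro impI)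
    fix x :: real assume x: "x \<in> {0..1}"
    have "comp_volterra \<phi> g x = integral {0..\<phi> x} g" by (rule A_eq[OF gi x])
    also have "\<dots> = integral {0..\<phi> x} (\<lambda>y. c * f y)"
      by (rule aeq_integral[OF f(3)[folded g_def] phi_range[OF x]])
    also have "\<dots> = c * integral {0..\<phi> x} f" by (rule integral_mult_right)
    also have "\<dots> = c * g x" using A_eq[OF fi x] by (simp add: g_def)
    finally show "comp_volterra \<phi> g x = c * g x" .
  qed
  then show ?thesis using gL gnz unfolding point_spectrum_def by blast
qed
end

theorem proposition5p5:
  fixes \<phi> :: "real \<Rightarrow> real" and p :: real
  assumes "strict_mono_on {0..1} \<phi>" and "continuous_on {0..1} \<phi>"
    and "\<phi> 0 = 0" and "\<phi> 1 = 1" and "1 \<le> p"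
  shows "quasisimilar p (comp_volterra \<phi>) 2 (comp_volterra \<phi>) \<and>
         point_spectrum p (comp_volterra \<phi>) = point_spectrum 2 (comp_volterra \<phi>)"
proof -
  interpret phi \<phi> using assms(1-4) by unfold_locales
  have p: "p \<ge> 1" using assms(5) by simp
  have two: "(2::real) \<ge> 1" by simp
  have refl: "aeq h h" for h :: "real \<Rightarrow> complex" unfolding aeq_def by simp
  have Q: "quasisimilar p (comp_volterra \<phi>) 2 (comp_volterra \<phi>)"
    unfolding quasisimilar_def
    using A_bounded_op[OF p two] A_injective[OF p] A_dense[OF p two]
      A_bounded_op[OF two p] A_injective[OF two] A_dense[OF two p] refl by blast
  have S: "point_spectrum p (comp_volterra \<phi>) = point_spectrum 2 (comp_volterra \<phi>)"
    using eig[OF p two] eig[OF two p] by blast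
  show ?thesis using Q S by blast
qed


end
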